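(* Let $(\mathcal{X},d_{\mathcal{X}})$ and $(\mathcal{Y},d_{\mathcal{Y}})$ be metric spaces and $(X,Y)\sim\mathbb{G}$ on $\mathcal{X}\times\mathcal{Y}$. Assume: (i) $\mathcal{L}_n=\{(X_1,Y_1),\ldots,(X_n,Y_n)\}$ consists of $n$ i.i.d. copies of $(X,Y)$, independent of $(X,Y)$; (ii) for $\mathbb{G}$-a.e. $x$ there exists a unique conditional Fréchet mean $m(x)=\arg\min_{y\in\mathcal{Y}}\mathsf{E}[d_{\mathcal{Y}}(Y,y)^2\mid X=x]$; (iii) the cumulative distribution function $F_R$ of $R=d_{\mathcal{Y}}(Y,m(X))$ is continuous on $\mathbb{R}$; (iv) $d_{\mathcal{Y}}(m(X),\widehat{m}(X))\to0$ in probability as $n\to\infty$. Then, as $n\to\infty$, $$\Delta_n:=\sup_{t\in\mathbb{R}}\big|\mathsf{P}\big(d_{\mathcal{Y}}(Y,\widehat{m}(X))<t\,\big|\,\mathcal{L}_n\big)-F_R(t)\big|\to0$$ in probability.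
   Context: $\widehat{m}$ denotes a random forest (more generally, a bagged regression estimator with values in $\mathcal{Y}$) trained on the sample $\mathcal{L}_n$. *)

theory Defs
  imports "HOL-Probability.Probability"
begin

definition sample_law :: "nat \<Rightarrow> ('x \<times> 'y) measure \<Rightarrow> (nat \<Rightarrow> 'x \<times> 'y) measure" where
  "sample_law n G = PiM {..<n} (\<lambda>_. G)"

text \<open>Joint law of (L_n, Theta, (X,Y)): sample, auxiliary randomness of the forest, and an
  independent new observation.\<close>
definition joint_law :: "nat \<Rightarrow> ('x \<times> 'y) measure \<Rightarrow> 't measure
    \<Rightarrow> ((nat \<Rightarrow> 'x \<times> 'y) \<times> 't \<times> ('x \<times> 'y)) measure" where
  "joint_law n G Q = sample_law n G \<Otimes>\<^sub>M (Q \<Otimes>\<^sub>M G)"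

definition X_law :: "('x::topological_space \<times> 'y) measure \<Rightarrow> 'x measure" where
  "X_law G = distr G borel fst"

text \<open>Conditional Frechet functional y \<mapsto> E[d(Y,y)^2 | X = x] w.r.t. a regular conditional law K.\<close>
definition frechet_fun :: "('x \<Rightarrow> 'y::metric_space measure) \<Rightarrow> 'x \<Rightarrow> 'y \<Rightarrow> ennreal" where
  "frechet_fun K x y = (\<integral>\<^sup>+ y'. ennreal ((dist y' y)\<^sup>2) \<partial>K x)"

definition F_R :: "('x \<times> 'y::metric_space) measure \<Rightarrow> ('x \<Rightarrow> 'y) \<Rightarrow> real \<Rightarrow> real" where
  "F_R G m t = measure G {z \<in> space G. dist (snd z) (m (fst z)) \<le> t}"

text \<open>Conditional probability P(d(Y, mhat(X)) < t | L_n = l), integrating out (Theta, X, Y).\<close>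
definition cond_prob :: "('t measure) \<Rightarrow> ('x \<times> 'y::metric_space) measure
    \<Rightarrow> ('t \<Rightarrow> 'x \<Rightarrow> 'y) \<Rightarrow> real \<Rightarrow> real" where
  "cond_prob Q G mh t = measure (Q \<Otimes>\<^sub>M G)
      {(\<theta>, z) \<in> space (Q \<Otimes>\<^sub>M G). dist (snd z) (mh \<theta> (fst z)) < t}"

definition Delta :: "('t measure) \<Rightarrow> ('x \<times> 'y::metric_space) measure
    \<Rightarrow> ('x \<Rightarrow> 'y) \<Rightarrow> ('t \<Rightarrow> 'x \<Rightarrow> 'y) \<Rightarrow> real" where
  "Delta Q G m mh = (SUP t::real. \<bar>cond_prob Q G mh t - F_R G m t\<bar>)"

end

theory Submission
  imports Defs
begin

lemma F_props:
  fixes G :: "('x::metric_space \<times> 'y::metric_space) measure" and m :: "'x \<Rightarrow> 'y"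
  assumes G: "prob_space G"
    and m_meas: "(\<lambda>z. dist (snd z) (m (fst z))) \<in> borel_measurable G"
  shows "mono (F_R G m)" "\<And>t. t < 0 \<Longrightarrow> F_R G m t = 0" "\<And>t. 0 \<le> F_R G m t" "\<And>t. F_R G m t \<le> 1"
proof -
  interpret prob_space G by (rule G)
  have S: "{z \<in> space G. dist (snd z) (m (fst z)) \<le> t} \<in> sets G" for t
    using m_meas by measurable
  show "mono (F_R G m)"
    unfolding mono_def F_R_def by (auto intro!: finite_measure_mono S)
  show "F_R G m t = 0" if "t < 0" for t
  proof -
    have eq: "{z \<in> space G. dist (snd z) (m (fst z)) \<le> t} = {}" using that
      by (auto dest: order.trans[OF zero_le_dist])
    show ?thesis unfolding F_R_def eq by simp
  qed
  show "0 \<le> F_R G m t" for t unfolding F_R_def by simp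
  show "F_R G m t \<le> 1" for t unfolding F_R_def by simp
qed

lemma F_modulus:
  fixes F :: "real \<Rightarrow> real"
  assumes mono: "mono F" and neg: "\<And>t. t < 0 \<Longrightarrow> F t = 0" and nn: "\<And>t. 0 \<le> F t"
    and bd: "\<And>t. F t \<le> 1" and cont: "continuous_on UNIV F" and e: "e > 0"
  shows "\<exists>d>0. \<forall>s. F (s + d) - F (s - d) \<le> e"
proof -
  define L where "L = (SUP t. F t)"
  have bdd: "bdd_above (range F)" using bd by (auto intro!: bdd_aboveI)
  have FL: "F t \<le> L" for t unfolding L_def using bdd by (intro cSUP_upper) auto
  have "L - e < L" using e by simp
  then obtain T where T: "L - e < F T" unfolding L_def using bdd
    by (subst (asm) less_cSUP_iff) auto
  have "uniformly_continuous_on {-1..T+1} F"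
    by (rule compact_uniformly_continuous) (auto intro: continuous_on_subset[OF cont])
  then obtain d0 where d0: "d0 > 0"
    and d0': "\<And>x x'. x \<in> {-1..T+1} \<Longrightarrow> x' \<in> {-1..T+1} \<Longrightarrow> dist x' x < d0 \<Longrightarrow> dist (F x') (F x) < e"
    unfolding uniformly_continuous_on_def using e by metis
  define d where "d = min (d0/3) (1/2)"
  have d: "d > 0" "d \<le> 1/2" "2 * d < d0" using d0 by (auto simp: d_def)
  have "F (s + d) - F (s - d) \<le> e" for s
  proof (cases "s - d < -1")
    case True
    then have "s + d < 0" using d by simp
    then show ?thesis using neg nn[of "s - d"] e by simp
  next
    case f1: False
    show ?thesis
    proof (cases "s + d > T + 1")
      case True
      then have "T \<le> s - d" using d by simp
      then have "F T \<le> F (s - d)" using mono by (auto dest: monoD)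
      then show ?thesis using T FL[of "s+d"] by simp
    next
      case False
      then have "dist (F (s + d)) (F (s - d)) < e"
        using f1 d by (intro d0') (auto simp: dist_real_def)
      then show ?thesis by (simp add: dist_real_def)
    qed
  qed
  then show ?thesis using d by blast
qed

lemma pw:
  fixes W R D :: "'a \<Rightarrow> real" and F :: "real \<Rightarrow> real"
  assumes M: "prob_space M"
    and [measurable]: "W \<in> borel_measurable M" "R \<in> borel_measurable M" "D \<in> borel_measurable M"
    and tri: "\<And>\<omega>. \<omega> \<in> space M \<Longrightarrow> W \<omega> \<le> R \<omega> + D \<omega> \<and> R \<omega> \<le> W \<omega> + D \<omega>"
    and mono: "mono F" and FM: "\<And>s. measure M {\<omega> \<in> space M. R \<omega> \<le> s} = F s"
    and modu: "\<And>s. F (s + d) - F (s - d) \<le> e" and d: "d > 0"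
  shows "\<bar>measure M {\<omega> \<in> space M. W \<omega> < t} - F t\<bar> \<le> e + measure M {\<omega> \<in> space M. d/2 < D \<omega>}"
proof -
  interpret prob_space M by (rule M)
  define A where "A = {\<omega> \<in> space M. W \<omega> < t}"
  define B where "B = {\<omega> \<in> space M. d/2 < D \<omega>}"
  define C1 where "C1 = {\<omega> \<in> space M. R \<omega> \<le> t + d}"
  define C2 where "C2 = {\<omega> \<in> space M. R \<omega> \<le> t - d}"
  have [simp]: "A \<in> sets M" "B \<in> sets M" "C1 \<in> sets M" "C2 \<in> sets M"
    unfolding A_def B_def C1_def C2_def by measurable
  have s1: "A \<subseteq> C1 \<union> B"
  proof
    fix x assume "x \<in> A"
    then have "x \<in> space M" "W x < t" by (auto simp: A_def)
    with tri[of x] d show "x \<in> C1 \<union> B" unfolding C1_def B_def by auto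
  qed
  have s2: "C2 \<subseteq> A \<union> B"
  proof
    fix x assume "x \<in> C2"
    then have "x \<in> space M" "R x \<le> t - d" by (auto simp: C2_def)
    with tri[of x] d show "x \<in> A \<union> B" unfolding A_def B_def by auto
  qed
  have "measure M A \<le> measure M (C1 \<union> B)"
    using s1 by (intro finite_measure_mono) auto
  also have "\<dots> \<le> measure M C1 + measure M B"
    by (intro measure_subadditive) auto
  finally have up: "measure M A \<le> F (t + d) + measure M B" using FM[of "t+d"] by (simp add: C1_def)
  have "measure M C2 \<le> measure M (A \<union> B)"
    using s2 by (intro finite_measure_mono) auto
  also have "\<dots> \<le> measure M A + measure M B"
    by (intro measure_subadditive) auto
  finally have lo: "F (t - d) \<le> measure M A + measure M B" using FM[of "t-d"] by (simp add: C2_def)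
  have "F (t - d) \<le> F t" "F t \<le> F (t + d)" using monoD[OF mono, of "t - d" t] monoD[OF mono, of t "t + d"] d by auto
  then show ?thesis using up lo modu[of t] unfolding A_def[symmetric] B_def[symmetric] by linarith
qed

theorem lemma2:
  fixes G :: "('x::metric_space \<times> 'y::metric_space) measure"
    and K :: "'x \<Rightarrow> 'y measure"
    and m :: "'x \<Rightarrow> 'y"
    and Q :: "nat \<Rightarrow> 't measure"
    and mhat :: "nat \<Rightarrow> (nat \<Rightarrow> 'x \<times> 'y) \<Rightarrow> 't \<Rightarrow> 'x \<Rightarrow> 'y"
  assumes G: "prob_space G" "sets G = sets (borel \<Otimes>\<^sub>M borel)"
    and Q: "\<And>n. prob_space (Q n)"
    and K_kernel: "K \<in> measurable (X_law G) (prob_algebra borel)"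
    and K_disint: "\<And>A. A \<in> sets G \<Longrightarrow>
                     emeasure G A = (\<integral>\<^sup>+ x. emeasure (K x) (Pair x -` A) \<partial>X_law G)"
    and frechet_mean: "AE x in X_law G. \<forall>y. y \<noteq> m x \<longrightarrow> frechet_fun K x (m x) < frechet_fun K x y"
    and m_meas: "(\<lambda>z. dist (snd z) (m (fst z))) \<in> borel_measurable G"
    and mhat_meas: "\<And>n. (\<lambda>(l, \<theta>, z). dist (snd z) (mhat n l \<theta> (fst z)))
                       \<in> borel_measurable (joint_law n G (Q n))"
    and mhat_meas2: "\<And>n. (\<lambda>(l, \<theta>, z). dist (m (fst z)) (mhat n l \<theta> (fst z)))
                       \<in> borel_measurable (joint_law n G (Q n))"
    and F_cont: "continuous_on UNIV (F_R G m)"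
    and consistent: "\<And>\<epsilon>. \<epsilon> > 0 \<Longrightarrow>
        (\<lambda>n. measure (joint_law n G (Q n))
           {(l, \<theta>, z) \<in> space (joint_law n G (Q n)). dist (m (fst z)) (mhat n l \<theta> (fst z)) > \<epsilon>})
        \<longlonglongrightarrow> 0"
  shows "\<And>\<epsilon>. \<epsilon> > 0 \<Longrightarrow>
        (\<lambda>n. measure (sample_law n G)
           {l \<in> space (sample_law n G). Delta (Q n) G m (mhat n l) > \<epsilon>}) \<longlonglongrightarrow> 0"
proof -
  fix \<epsilon> :: real assume \<epsilon>: "\<epsilon> > 0"
  interpret G: prob_space G by (rule G(1))
  note Fp = F_props[OF G(1) m_meas]
  obtain d where d: "d > 0" and modu: "\<And>s. F_R G m (s + d) - F_R G m (s - d) \<le> \<epsilon>/2"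
    using F_modulus[OF Fp(1) Fp(2) Fp(3) Fp(4) F_cont, of "\<epsilon>/2"] \<epsilon> by auto
  have key: "measure (sample_law n G) {l \<in> space (sample_law n G). Delta (Q n) G m (mhat n l) > \<epsilon>}
      \<le> (2/\<epsilon>) * measure (joint_law n G (Q n))
           {(l, \<theta>, z) \<in> space (joint_law n G (Q n)). dist (m (fst z)) (mhat n l \<theta> (fst z)) > d/2}" for n
  proof -
    define S where "S = sample_law n G"
    define M where "M = Q n \<Otimes>\<^sub>M G"
    define J where "J = joint_law n G (Q n)"
    have JSM: "J = S \<Otimes>\<^sub>M M" unfolding J_def S_def M_def joint_law_def by simp
    interpret S: prob_space S unfolding S_def sample_law_def by (rule prob_space_PiM) (rule G(1))
    interpret Qn: prob_space "Q n" by (rule Q)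
    interpret M: prob_space M unfolding M_def by (rule prob_space_pair[OF Q G(1)])
    interpret J: prob_space J unfolding JSM by (rule prob_space_pair) unfold_locales
    define Dj where "Dj = (\<lambda>(l, \<theta>, z::'x \<times> 'y). dist (m (fst z)) (mhat n l \<theta> (fst z)))"
    define Bj where "Bj = {(l, \<theta>, z) \<in> space J. dist (m (fst z)) (mhat n l \<theta> (fst z)) > d/2}"
    have Dj_meas: "Dj \<in> borel_measurable J" using mhat_meas2[of n] unfolding Dj_def J_def .
    have "Bj = {x \<in> space J. d/2 < Dj x}" unfolding Bj_def Dj_def by auto
    also have "\<dots> \<in> sets J" using Dj_meas by measurable
    finally have Bj_sets: "Bj \<in> sets (S \<Otimes>\<^sub>M M)" unfolding JSM .
    define pe where "pe = (\<lambda>l. emeasure M (Pair l -` Bj))"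
    have pe_meas[measurable]: "pe \<in> borel_measurable S"
      unfolding pe_def by (rule M.measurable_emeasure_Pair[OF Bj_sets])
    have Delta_le: "Delta (Q n) G m (mhat n l) \<le> \<epsilon>/2 + measure M (Pair l -` Bj)" if l: "l \<in> space S" for l
    proof -
      define Wl where "Wl = (\<lambda>(\<theta>::'t, z::'x \<times> 'y). dist (snd z) (mhat n l \<theta> (fst z)))"
      define Rl where "Rl = (\<lambda>(\<theta>::'t, z::'x \<times> 'y). dist (snd z) (m (fst z)))"
      define Dl where "Dl = (\<lambda>(\<theta>::'t, z::'x \<times> 'y). dist (m (fst z)) (mhat n l \<theta> (fst z)))"
      have "(\<lambda>y. (\<lambda>(l, \<theta>, z). dist (snd z) (mhat n l \<theta> (fst z))) (l, y)) \<in> borel_measurable M"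
        by (rule measurable_Pair2[OF mhat_meas[of n, unfolded joint_law_def, folded S_def M_def] l])
      then have Wm: "Wl \<in> borel_measurable M" unfolding Wl_def by simp
      have "(\<lambda>y. (\<lambda>(l, \<theta>, z). dist (m (fst z)) (mhat n l \<theta> (fst z))) (l, y)) \<in> borel_measurable M"
        by (rule measurable_Pair2[OF mhat_meas2[of n, unfolded joint_law_def, folded S_def M_def] l])
      then have Dm: "Dl \<in> borel_measurable M" unfolding Dl_def by simp
      have "(\<lambda>x. dist (snd (snd x)) (m (fst (snd x)))) \<in> borel_measurable M"
        using measurable_comp[OF measurable_snd m_meas] unfolding M_def by (simp add: o_def)
      then have Rm: "Rl \<in> borel_measurable M" unfolding Rl_def by (simp add: split_beta')
      have tri: "Wl \<omega> \<le> Rl \<omega> + Dl \<omega> \<and> Rl \<omega> \<le> Wl \<omega> + Dl \<omega>" for \<omega>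
        unfolding Wl_def Rl_def Dl_def
        by (simp add: split_beta' dist_triangle dist_triangle2)
      have FM: "measure M {\<omega> \<in> space M. Rl \<omega> \<le> s} = F_R G m s" for s
      proof -
        have Bs: "{z \<in> space G. dist (snd z) (m (fst z)) \<le> s} \<in> sets G" using m_meas by measurable
        have "{\<omega> \<in> space M. Rl \<omega> \<le> s} = space (Q n) \<times> {z \<in> space G. dist (snd z) (m (fst z)) \<le> s}"
          unfolding M_def Rl_def by (auto simp: space_pair_measure)
        then have "emeasure M {\<omega> \<in> space M. Rl \<omega> \<le> s} = emeasure G {z \<in> space G. dist (snd z) (m (fst z)) \<le> s}"
          unfolding M_def using G.emeasure_pair_measure_Times[OF sets.top[of "Q n"] Bs] by (simp add: Qn.emeasure_space_1)
        then show ?thesis unfolding F_R_def measure_def by simp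
      qed
      have pre: "Pair l -` Bj = {\<omega> \<in> space M. d/2 < Dl \<omega>}"
        using l unfolding Bj_def Dl_def JSM by (auto simp: space_pair_measure)
      have cp: "cond_prob (Q n) G (mhat n l) t = measure M {\<omega> \<in> space M. Wl \<omega> < t}" for t
        unfolding cond_prob_def M_def Wl_def by (rule arg_cong[where f="measure _"]) auto
      have "\<bar>cond_prob (Q n) G (mhat n l) t - F_R G m t\<bar> \<le> \<epsilon>/2 + measure M (Pair l -` Bj)" for t
        unfolding cp pre by (rule pw[OF M.prob_space_axioms Wm Rm Dm tri Fp(1) FM modu d])
      then show ?thesis unfolding Delta_def by (intro cSUP_least) auto
    qed
    define c where "c = ennreal (2/\<epsilon>)"
    have sub: "{l \<in> space S. Delta (Q n) G m (mhat n l) > \<epsilon>} \<subseteq> {l \<in> space S. 1 \<le> c * pe l}"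
    proof safe
      fix l assume l: "l \<in> space S" and gt: "\<epsilon> < Delta (Q n) G m (mhat n l)"
      let ?p = "measure M (Pair l -` Bj)"
      have "\<epsilon>/2 < ?p" using Delta_le[OF l] gt by simp
      then have "1 \<le> 2/\<epsilon> * ?p" using \<epsilon> by (simp add: field_simps)
      moreover have "c * pe l = ennreal (2/\<epsilon> * ?p)"
        unfolding c_def pe_def M.emeasure_eq_measure using \<epsilon> by (subst ennreal_mult) auto
      ultimately show "1 \<le> c * pe l" by (simp add: ennreal_le_iff[symmetric])
    qed
    have "emeasure S {l \<in> space S. Delta (Q n) G m (mhat n l) > \<epsilon>} \<le> emeasure S {l \<in> space S. 1 \<le> c * pe l}"
      by (rule emeasure_mono[OF sub]) measurable
    also have "\<dots> \<le> c * (\<integral>\<^sup>+ l. pe l * indicator (space S) l \<partial>S)"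
      by (rule nn_integral_Markov_inequality) auto
    also have "(\<integral>\<^sup>+ l. pe l * indicator (space S) l \<partial>S) = (\<integral>\<^sup>+ l. pe l \<partial>S)"
      by (rule nn_integral_cong) auto
    also have "\<dots> = emeasure J Bj"
      unfolding JSM pe_def by (rule M.emeasure_pair_measure_alt[OF Bj_sets, symmetric])
    also have "c * emeasure J Bj = ennreal (2/\<epsilon> * measure J Bj)"
      unfolding c_def J.emeasure_eq_measure using \<epsilon> by (subst ennreal_mult) auto
    finally have "ennreal (measure S {l \<in> space S. Delta (Q n) G m (mhat n l) > \<epsilon>}) \<le> ennreal (2/\<epsilon> * measure J Bj)"
      by (simp add: S.emeasure_eq_measure)
    then have "measure S {l \<in> space S. Delta (Q n) G m (mhat n l) > \<epsilon>} \<le> 2/\<epsilon> * measure J Bj"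
      using \<epsilon> by (subst (asm) ennreal_le_iff) auto
    then show ?thesis unfolding S_def J_def Bj_def .
  qed
  have lim: "(\<lambda>n. (2/\<epsilon>) * measure (joint_law n G (Q n))
           {(l, \<theta>, z) \<in> space (joint_law n G (Q n)). dist (m (fst z)) (mhat n l \<theta> (fst z)) > d/2}) \<longlonglongrightarrow> 0"
    using tendsto_mult[OF tendsto_const consistent[of "d/2"], of "2/\<epsilon>"] d by simp
  show "(\<lambda>n. measure (sample_law n G)
           {l \<in> space (sample_law n G). Delta (Q n) G m (mhat n l) > \<epsilon>}) \<longlonglongrightarrow> 0"
    proof (rule tendsto_sandwich[OF _ _ tendsto_const lim])
    show "\<forall>\<^sub>F n in sequentially. 0 \<le> measure (sample_law n G)
           {l \<in> space (sample_law n G). Delta (Q n) G m (mhat n l) > \<epsilon>}" by simp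
    show "\<forall>\<^sub>F n in sequentially. measure (sample_law n G)
           {l \<in> space (sample_law n G). Delta (Q n) G m (mhat n l) > \<epsilon>} \<le> (2/\<epsilon>) * measure (joint_law n G (Q n))
           {(l, \<theta>, z) \<in> space (joint_law n G (Q n)). dist (m (fst z)) (mhat n l \<theta> (fst z)) > d/2}"
      by (rule always_eventually) (intro allI key)
  qed
qed

end
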